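(* Let $\bm X=[\bm x_1,\dots,\bm x_p]\in\mathbb{R}^{n\times p}$ have full column rank and unit-norm columns, let $M\ge1$ be an integer with $n\ge p+M$, and fix $j\in[p]$. Let $\bm X_{\backslash j}$ be $\bm X$ with column $j$ removed, $\bm U_{\backslash j}\in\mathbb{R}^{n\times(p-1)}$ a matrix whose orthonormal columns span the column space of $\bm X_{\backslash j}$, and $\sigma_j^2=\|\bm x_j-\bm U_{\backslash j}\bm U_{\backslash j}^\top\bm x_j\|^2$. Suppose $s_j\in[0,\frac{M+1}{M}\sigma_j^2]$, and let $\bm e_M\in\mathbb{R}^M$ be the all-ones vector. Then the matrix $\bm A_j=s_j\bm I_M+s_j(1-s_j/\sigma_j^2)\bm e_M\bm e_M^\top$ is positive semidefinite. Moreover, let $\bm C\in\mathbb{R}^{M\times M}$ satisfy $\bm C^\top\bm C=\bm A_j$, let $\bm R\in\mathbb{R}^{n\times M}$ have orthonormal columns with $\bm X^\top\bm R=\bm 0$, and define $$\widetilde{\bm X}^{(j)}=[\widetilde{\bm x}_j^{(1)},\dots,\widetilde{\bm x}_j^{(M)}]=\Big[\frac{s_j}{\sigma_j^2}\bm U_{\backslash j}\bm U_{\backslash j}^\top\bm x_j+\Big(1-\frac{s_j}{\sigma_j^2}\Big)\bm x_j\Big]\bm e_M^\top+\bm R\bm C.$$ Then for each $m\in[M]$: (i) $\bm x_i^\top\widetilde{\bm x}_j^{(m)}=\bm x_i^\top\bm x_j$ for all $i\in[p]\setminus\{j\}$; (ii) $\bm x_j^\top\widetilde{\bm x}_j^{(m)}=1-s_j$;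 (iii) $(\widetilde{\bm x}_j^{(m)})^\top\widetilde{\bm x}_j^{(m)}=1$; (iv) $(\widetilde{\bm x}_j^{(m)})^\top\widetilde{\bm x}_j^{(\ell)}=1-s_j$ for all $\ell\in[M]\setminus\{m\}$. *)

theory Defs
  imports "Jordan_Normal_Form.DL_Rank"
begin

text \<open>Real matrices are Jordan_Normal_Form matrices with explicit dimensions
  (carrier_mat). Indices are 0-based: column j of X corresponds to x_(j+1).\<close>

definition full_col_rank :: "nat \<Rightarrow> nat \<Rightarrow> real mat \<Rightarrow> bool" where
  "full_col_rank n p X \<longleftrightarrow> X \<in> carrier_mat n p \<and> vec_space.rank n X = p"

definition del_col :: "real mat \<Rightarrow> nat \<Rightarrow> real mat" where
  "del_col X j = mat (dim_row X) (dim_col X - 1)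
      (\<lambda>(i, k). X $$ (i, if k < j then k else Suc k))"

definition orthonormal_cols :: "real mat \<Rightarrow> bool" where
  "orthonormal_cols U \<longleftrightarrow> transpose_mat U * U = 1\<^sub>m (dim_col U)"

definition sqnorm :: "real vec \<Rightarrow> real" where
  "sqnorm v = v \<bullet> v"

definition psd :: "real mat \<Rightarrow> bool" where
  "psd A \<longleftrightarrow> square_mat A \<and> transpose_mat A = A \<and>
     (\<forall>v \<in> carrier_vec (dim_row A). 0 \<le> v \<bullet> (A *\<^sub>v v))"

definition ones_vec :: "nat \<Rightarrow> real vec" where
  "ones_vec m = vec m (\<lambda>_. 1)"

definition outer :: "real vec \<Rightarrow> real vec \<Rightarrow> real mat" where
  "outer u v = mat (dim_vec u) (dim_vec v) (\<lambda>(i, k). u $ i * v $ k)"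

end

theory Submission imports Defs begin

lemma self_sp_nonneg: fixes v :: "real vec" shows "0 \<le> v \<bullet> v"
  unfolding scalar_prod_def by (intro sum_nonneg) auto

lemma orth_mult:
  fixes A :: "real mat"
  assumes A: "A \<in> carrier_mat n k" and w: "w \<in> carrier_vec n" and u: "u \<in> carrier_vec k"
    and o: "\<forall>i<k. col A i \<bullet> w = 0"
  shows "(A *\<^sub>v u) \<bullet> w = 0"
proof -
  have z: "transpose_mat A *\<^sub>v w = 0\<^sub>v k"
    by (rule eq_vecI) (use A o in auto)
  have "(A *\<^sub>v u) \<bullet> w = w \<bullet> (A *\<^sub>v u)" by (rule comm_scalar_prod[of _ n]) (use A u w in auto)
  also have "\<dots> = (transpose_mat A *\<^sub>v w) \<bullet> u" using transpose_vec_mult_scalar[OF A u w] by simp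
  also have "\<dots> = 0" using z u by simp
  finally show ?thesis .
qed

lemma col_in_colspace:
  fixes A :: "real mat"
  assumes A: "A \<in> carrier_mat n k" and i: "i < k"
  shows "col A i \<in> vec_space.col_space n A"
proof -
  have "A *\<^sub>v unit_vec k i = col A i"
    by (rule eq_vecI) (use A i in auto)
  then show ?thesis using vec_space.col_space_eq[OF A] A i
    by (auto intro!: bexI[of _ "unit_vec k i"])
qed

lemma colspace_E:
  fixes A :: "real mat"
  assumes A: "A \<in> carrier_mat n k" and v: "v \<in> vec_space.col_space n A"
  obtains x where "x \<in> carrier_vec k" "A *\<^sub>v x = v"
  using vec_space.col_space_eq[OF A] A v by auto

lemma adj:
  fixes U :: "real mat"
  assumes U: "U \<in> carrier_mat n k" and u: "u \<in> carrier_vec n" and w: "w \<in> carrier_vec k"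
  shows "u \<bullet> (U *\<^sub>v w) = (transpose_mat U *\<^sub>v u) \<bullet> w"
  using transpose_vec_mult_scalar[OF U w u] by simp

lemma on_pres:
  fixes U :: "real mat"
  assumes U: "U \<in> carrier_mat n k" and UU: "transpose_mat U * U = 1\<^sub>m k"
    and c: "c \<in> carrier_vec k" and d: "d \<in> carrier_vec k"
  shows "(U *\<^sub>v c) \<bullet> (U *\<^sub>v d) = c \<bullet> d"
proof -
  have "(U *\<^sub>v c) \<bullet> (U *\<^sub>v d) = (transpose_mat U *\<^sub>v (U *\<^sub>v c)) \<bullet> d"
    using adj[OF U _ d, of "U *\<^sub>v c"] U c by simp
  also have "transpose_mat U *\<^sub>v (U *\<^sub>v c) = (transpose_mat U * U) *\<^sub>v c"
    by (rule assoc_mult_mat_vec[symmetric, of _ k n _ k]) (use U c in auto)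
  also have "\<dots> = c" using UU c by simp
  finally show ?thesis .
qed

lemma cs_ones:
  fixes v :: "nat \<Rightarrow> real"
  shows "(\<Sum>i\<in>{0..<M}. v i)\<^sup>2 \<le> real M * (\<Sum>i\<in>{0..<M}. (v i)\<^sup>2)"
proof (cases "M = 0")
  case True then show ?thesis by simp
next
  case False
  define S where "S = (\<Sum>i\<in>{0..<M}. v i)"
  define c where "c = S / M"
  have "0 \<le> (\<Sum>i\<in>{0..<M}. (v i - c)\<^sup>2)" by (simp add: sum_nonneg)
  also have "(\<Sum>i\<in>{0..<M}. (v i - c)\<^sup>2) = (\<Sum>i\<in>{0..<M}. (v i)\<^sup>2 - 2 * c * v i + c\<^sup>2)"
    by (rule sum.cong) (simp_all add: power2_diff)
  also have "\<dots> = (\<Sum>i\<in>{0..<M}. (v i)\<^sup>2) - (\<Sum>i\<in>{0..<M}. 2 * c * v i) + (\<Sum>i\<in>{0..<M}. c\<^sup>2)"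
    by (simp add: sum.distrib sum_subtractf)
  also have "(\<Sum>i\<in>{0..<M}. 2 * c * v i) = 2 * c * S"
    by (simp add: S_def sum_distrib_left)
  also have "(\<Sum>i\<in>{0..<M}. c\<^sup>2) = M * c\<^sup>2" by simp
  finally have h: "0 \<le> (\<Sum>i\<in>{0..<M}. (v i)\<^sup>2) - 2 * c * S + M * c\<^sup>2" .
  have "2 * c * S - M * c\<^sup>2 = S\<^sup>2 / M" using False by (simp add: c_def power2_eq_square field_simps)
  then have "S\<^sup>2 / M \<le> (\<Sum>i\<in>{0..<M}. (v i)\<^sup>2)" using h by linarith
  then show ?thesis using False by (simp add: S_def field_simps)
qed

theorem lemma2p1:
  fixes n p M j :: nat and X U :: "real mat" and s :: real
  assumes X: "X \<in> carrier_mat n p" and rank: "full_col_rank n p X"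
    and unit: "\<forall>i < p. sqnorm (col X i) = 1"
    and M: "M \<ge> 1" and nM: "n \<ge> p + M"
    and j: "j < p"
    and U: "U \<in> carrier_mat n (p - 1)" and Uon: "orthonormal_cols U"
    and Uspan: "vec_space.col_space n U = vec_space.col_space n (del_col X j)"
    and s: "0 \<le> s"
      "s \<le> (real M + 1) / real M * sqnorm (col X j - U * transpose_mat U *\<^sub>v col X j)"
  shows
    "let \<sigma>2 = sqnorm (col X j - U * transpose_mat U *\<^sub>v col X j);
         e = ones_vec M;
         A = s \<cdot>\<^sub>m 1\<^sub>m M + (s * (1 - s / \<sigma>2)) \<cdot>\<^sub>m outer e e
     in psd A \<and>
        (\<forall>C R. C \<in> carrier_mat M M \<and> transpose_mat C * C = A \<and>
               R \<in> carrier_mat n M \<and> orthonormal_cols R \<and>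
               transpose_mat X * R = 0\<^sub>m p M \<longrightarrow>
          (let Xt = outer ((s / \<sigma>2) \<cdot>\<^sub>v (U * transpose_mat U *\<^sub>v col X j)
                            + (1 - s / \<sigma>2) \<cdot>\<^sub>v col X j) e + R * C
           in \<forall>m < M.
                (\<forall>i < p. i \<noteq> j \<longrightarrow> col X i \<bullet> col Xt m = col X i \<bullet> col X j) \<and>
                col X j \<bullet> col Xt m = 1 - s \<and>
                col Xt m \<bullet> col Xt m = 1 \<and>
                (\<forall>l < M. l \<noteq> m \<longrightarrow> col Xt m \<bullet> col Xt l = 1 - s)))"
proof -
  define x where "x = col X j"
  define y where "y = transpose_mat U *\<^sub>v x"
  define P where "P = U *\<^sub>v y"
  define \<sigma>2 where "\<sigma>2 = sqnorm (x - P)"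
  define a where "a = s / \<sigma>2"
  define e where "e = ones_vec M"
  define A where "A = s \<cdot>\<^sub>m 1\<^sub>m M + (s * (1 - a)) \<cdot>\<^sub>m outer e e"
  have xc: "x \<in> carrier_vec n" using X j by (simp add: x_def)
  have yc: "y \<in> carrier_vec (p - 1)" using U xc by (simp add: y_def)
  have Pc: "P \<in> carrier_vec n" using U yc by (simp add: P_def)
  have Pe: "U * transpose_mat U *\<^sub>v col X j = P"
    unfolding P_def y_def x_def using U X j by (subst assoc_mult_mat_vec[of _ n "p - 1" _ n]) auto
  have UU: "transpose_mat U * U = 1\<^sub>m (p - 1)" using Uon U by (simp add: orthonormal_cols_def)
  have xx: "x \<bullet> x = 1" using unit j by (simp add: x_def sqnorm_def)
  have xP: "x \<bullet> P = y \<bullet> y" unfolding P_def using adj[OF U xc yc] by (simp add: y_def)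
  have PP: "P \<bullet> P = y \<bullet> y" unfolding P_def by (rule on_pres[OF U UU yc yc])
  have Px: "P \<bullet> x = y \<bullet> y" using xP comm_scalar_prod[OF Pc xc] by simp
  have \<sigma>: "\<sigma>2 = 1 - y \<bullet> y"
    unfolding \<sigma>2_def sqnorm_def using xc Pc xx xP PP Px
    by (simp add: minus_scalar_prod_distrib[of _ n] scalar_prod_minus_distrib[of _ n])
  have \<sigma>0: "0 \<le> \<sigma>2" unfolding \<sigma>2_def sqnorm_def by (rule self_sp_nonneg)
  have s2: "s \<le> (real M + 1) / real M * \<sigma>2"
    using s(2) by (simp only: Pe \<sigma>2_def x_def)
  have as: "a * \<sigma>2 = s"
  proof (cases "\<sigma>2 = 0")
    case True
    then have "s = 0" using s(1) s2 by simp
    then show ?thesis using True by (simp add: a_def)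
  qed (simp add: a_def)
  have s_eq: "s = a * (1 - y \<bullet> y)" using as \<sigma> by simp
  have a_le: "a \<le> (real M + 1) / real M"
  proof (cases "\<sigma>2 = 0")
    case True then show ?thesis by (simp add: a_def)
  next
    case False
    then have "0 < \<sigma>2" using \<sigma>0 by simp
    moreover have "s \<le> (real M + 1) / real M * \<sigma>2"
      by (rule s2)
    ultimately show ?thesis by (simp add: a_def divide_le_eq)
  qed
  have D: "del_col X j \<in> carrier_mat n (p - 1)" using X by (simp add: del_col_def)
  have colD: "col (del_col X j) k = col X (if k < j then k else Suc k)" if k: "k < p - 1" for k
    by (rule eq_vecI) (use X k in \<open>auto simp: del_col_def\<close>)
  have xi_in: "col X i \<in> vec_space.col_space n U" if i: "i < p" "i \<noteq> j" for i
  proof -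
    define k where "k = (if i < j then i else i - 1)"
    have k: "k < p - 1" using i j by (auto simp: k_def)
    have "col (del_col X j) k = col X i" using colD[OF k] i by (auto simp: k_def)
    then show ?thesis using col_in_colspace[OF D k] Uspan by simp
  qed
  have colXc: "col X i \<in> carrier_vec n" for i using col_dim[of X i] X by simp
  have xiP: "col X i \<bullet> P = col X i \<bullet> x" if i: "i < p" "i \<noteq> j" for i
  proof -
    obtain w where w: "w \<in> carrier_vec (p - 1)" "U *\<^sub>v w = col X i"
      using colspace_E[OF U xi_in[OF i]] by blast
    have "col X i \<bullet> P = w \<bullet> y" unfolding P_def w(2)[symmetric] by (rule on_pres[OF U UU w(1) yc])
    moreover have "col X i \<bullet> x = x \<bullet> (U *\<^sub>v w)" using comm_scalar_prod[OF colXc xc] w(2) by simp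
    moreover have "x \<bullet> (U *\<^sub>v w) = y \<bullet> w" using adj[OF U xc w(1)] by (simp add: y_def)
    moreover have "y \<bullet> w = w \<bullet> y" using comm_scalar_prod[OF yc w(1)] .
    ultimately show ?thesis by simp
  qed
  have ec: "e \<in> carrier_vec M" and e1: "\<And>k. k < M \<Longrightarrow> e $ k = 1"
    by (auto simp: e_def ones_vec_def)
  have Aidx: "A $$ (k, l) = (if k = l then s else 0) + s * (1 - a)" if "k < M" "l < M" for k l
    using that ec e1 by (simp add: A_def outer_def)
  have Ac: "A \<in> carrier_mat M M" using ec by (simp add: A_def outer_def)
  have psdA: "psd A"
  proof -
    have sym: "transpose_mat A = A"
      by (rule eq_matI) (use Ac Aidx in auto)
    define b where "b = s * (1 - a)"
    have b: "- s / real M \<le> b"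
    proof -
      have "real M > 0" using M by simp
      then have "1 - a \<ge> - 1 / real M" using a_le by (simp add: field_simps)
      then have "s * (1 - a) \<ge> s * (- 1 / real M)" using s(1) by (rule mult_left_mono)
      then show ?thesis by (simp add: b_def)
    qed
    have q: "0 \<le> w \<bullet> (A *\<^sub>v w)" if w: "w \<in> carrier_vec M" for w
    proof -
      define S where "S = (\<Sum>k\<in>{0..<M}. w $ k)"
      define Q where "Q = (\<Sum>k\<in>{0..<M}. (w $ k)\<^sup>2)"
      have Aw: "A *\<^sub>v w = vec M (\<lambda>i. s * w $ i + b * S)"
      proof (rule eq_vecI)
        fix i assume "i < dim_vec (vec M (\<lambda>i. s * w $ i + b * S))"
        then have i: "i < M" by simp
        have "(A *\<^sub>v w) $ i = (\<Sum>k\<in>{0..<M}. A $$ (i, k) * w $ k)"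
          using Ac w i by (simp add: scalar_prod_def row_def)
        also have "\<dots> = (\<Sum>k\<in>{0..<M}. (if i = k then s * w $ k else 0) + b * w $ k)"
        proof (rule sum.cong[OF refl])
          fix k assume "k \<in> {0..<M}"
          then have "A $$ (i, k) = (if i = k then s else 0) + b" using Aidx[of i k] i by (simp add: b_def)
          then show "A $$ (i, k) * w $ k = (if i = k then s * w $ k else 0) + b * w $ k"
            by (simp add: algebra_simps)
        qed
        also have "\<dots> = s * w $ i + b * S"
          using i by (simp add: sum.distrib S_def sum_distrib_left)
        finally show "(A *\<^sub>v w) $ i = vec M (\<lambda>i. s * w $ i + b * S) $ i" using i by simp
      qed (use Ac in simp)
      have "w \<bullet> (A *\<^sub>v w) = (\<Sum>i\<in>{0..<M}. w $ i * (s * w $ i + b * S))"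
        using w unfolding Aw by (simp add: scalar_prod_def)
      also have "\<dots> = s * Q + b * S\<^sup>2"
        by (simp add: algebra_simps sum.distrib sum_distrib_left Q_def S_def power2_eq_square)
      finally have eq: "w \<bullet> (A *\<^sub>v w) = s * Q + b * S\<^sup>2" .
      have Q0: "0 \<le> Q" unfolding Q_def by (simp add: sum_nonneg)
      have cs: "S\<^sup>2 \<le> real M * Q" unfolding S_def Q_def by (rule cs_ones)
      show ?thesis
      proof (cases "0 \<le> b")
        case True then show ?thesis using eq Q0 s(1) by simp
      next
        case False
        have "b * S\<^sup>2 \<ge> b * (real M * Q)" using False cs by (simp add: mult_left_mono_neg)
        moreover have "b * (real M * Q) \<ge> (- s / real M) * (real M * Q)"
          using b Q0 by (intro mult_right_mono) auto
        moreover have "(- s / real M) * (real M * Q) = - s * Q" using M by simp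
        ultimately show ?thesis using eq by linarith
      qed
    qed
    show ?thesis unfolding psd_def using Ac sym q by auto
  qed
  have main: "(\<forall>i<p. i \<noteq> j \<longrightarrow> col X i \<bullet> col (outer (a \<cdot>\<^sub>v P + (1 - a) \<cdot>\<^sub>v x) e + R * C) m = col X i \<bullet> x) \<and>
      x \<bullet> col (outer (a \<cdot>\<^sub>v P + (1 - a) \<cdot>\<^sub>v x) e + R * C) m = 1 - s \<and>
      col (outer (a \<cdot>\<^sub>v P + (1 - a) \<cdot>\<^sub>v x) e + R * C) m \<bullet> col (outer (a \<cdot>\<^sub>v P + (1 - a) \<cdot>\<^sub>v x) e + R * C) m = 1 \<and>
      (\<forall>l<M. l \<noteq> m \<longrightarrow> col (outer (a \<cdot>\<^sub>v P + (1 - a) \<cdot>\<^sub>v x) e + R * C) m \<bullet> col (outer (a \<cdot>\<^sub>v P + (1 - a) \<cdot>\<^sub>v x) e + R * C) l = 1 - s)"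
    if C: "C \<in> carrier_mat M M" and CA: "transpose_mat C * C = A" and R: "R \<in> carrier_mat n M"
      and Ron: "orthonormal_cols R" and XR0: "transpose_mat X * R = 0\<^sub>m p M" and m: "m < M" for C R m
  proof -
    define v where "v = a \<cdot>\<^sub>v P + (1 - a) \<cdot>\<^sub>v x"
    have vc: "v \<in> carrier_vec n" using Pc xc by (simp add: v_def)
    have ovc: "outer v e \<in> carrier_mat n M" using vc ec by (simp add: outer_def)
    have colXt: "col (outer v e + R * C) k = v + R *\<^sub>v col C k" if k: "k < M" for k
    proof -
      have "col (outer v e) k = v"
        by (rule eq_vecI) (use vc ec e1 k in \<open>auto simp: outer_def\<close>)
      moreover have "col (outer v e + R * C) k = col (outer v e) k + col (R * C) k"
        by (rule col_add[OF ovc _ k]) (use R C in simp)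
      moreover have "col (R * C) k = R *\<^sub>v col C k" by (rule col_mult2[OF R C k])
      ultimately show ?thesis by (simp only:)
    qed
    have Rc: "R *\<^sub>v col C k \<in> carrier_vec n" for k using R col_dim[of C k] C by simp
    have colR: "col R l \<in> carrier_vec n" for l using col_dim[of R l] R by simp
    have cc: "col C k \<in> carrier_vec M" for k using col_dim[of C k] C by simp
    have RR': "transpose_mat R * R = 1\<^sub>m M" using Ron R by (simp add: orthonormal_cols_def)
    have XR: "col X i \<bullet> col R k = 0" if "i < p" "k < M" for i k
    proof -
      have "(transpose_mat X * R) $$ (i, k) = 0" using XR0 that by simp
      moreover have "(transpose_mat X * R) $$ (i, k) = row (transpose_mat X) i \<bullet> col R k"
        by (rule index_mult_mat(1)) (use that X R in auto)
      moreover have "row (transpose_mat X) i = col X i"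
        by (rule row_transpose) (use that X in auto)
      ultimately show ?thesis by simp
    qed
    have RX: "(R *\<^sub>v c) \<bullet> col X i = 0" if "i < p" "c \<in> carrier_vec M" for i c
    proof (rule orth_mult[OF R colXc that(2)], intro allI impI)
      fix k assume k: "k < M"
      have "col R k \<bullet> col X i = col X i \<bullet> col R k" by (rule comm_scalar_prod[OF colR colXc])
      then show "col R k \<bullet> col X i = 0" using XR[OF that(1) k] by simp
    qed
    have XRc: "col X i \<bullet> (R *\<^sub>v c) = 0" if "i < p" "c \<in> carrier_vec M" for i c
      using RX[OF that] comm_scalar_prod[OF colXc, of "R *\<^sub>v c"] R that by simp
    have UR: "col U k \<bullet> col R l = 0" if "k < p - 1" "l < M" for k l
    proof -
      have "col U k \<in> vec_space.col_space n (del_col X j)" using col_in_colspace[OF U that(1)] Uspan by simp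
      then obtain w where w: "w \<in> carrier_vec (p - 1)" "del_col X j *\<^sub>v w = col U k"
        using colspace_E[OF D] by blast
      have "(del_col X j *\<^sub>v w) \<bullet> col R l = 0"
      proof (rule orth_mult[OF D _ w(1)])
        show "col R l \<in> carrier_vec n" by (rule colR)
        show "\<forall>i<p - 1. col (del_col X j) i \<bullet> col R l = 0"
          using colD XR that j by auto
      qed
      then show ?thesis using w(2) by simp
    qed
    have PR: "(R *\<^sub>v c) \<bullet> P = 0" if c: "c \<in> carrier_vec M" for c
    proof (rule orth_mult[OF R Pc c], intro allI impI)
      fix l assume l: "l < M"
      have "(U *\<^sub>v y) \<bullet> col R l = 0"
        by (rule orth_mult[OF U _ yc]) (use colR l UR in auto)
      then show "col R l \<bullet> P = 0" using comm_scalar_prod[of "col R l" n P] colR Pc by (simp add: P_def)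
    qed
    have PR': "P \<bullet> (R *\<^sub>v c) = 0" if c: "c \<in> carrier_vec M" for c
      using PR[OF c] comm_scalar_prod[OF Pc, of "R *\<^sub>v c"] R c by simp
    have xR: "x \<bullet> (R *\<^sub>v c) = 0" "(R *\<^sub>v c) \<bullet> x = 0" if c: "c \<in> carrier_vec M" for c
      using XRc[OF j c] RX[OF j c] by (simp_all add: x_def)
    have sv1: "a \<cdot>\<^sub>v P \<in> carrier_vec n" "(1 - a) \<cdot>\<^sub>v x \<in> carrier_vec n" using Pc xc by auto
    have vR1: "v \<bullet> (R *\<^sub>v c) = 0" if c: "c \<in> carrier_vec M" for c
    proof -
      have Rcc: "R *\<^sub>v c \<in> carrier_vec n" using R c by simp
      have "v \<bullet> (R *\<^sub>v c) = (a \<cdot>\<^sub>v P) \<bullet> (R *\<^sub>v c) + ((1 - a) \<cdot>\<^sub>v x) \<bullet> (R *\<^sub>v c)"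
        unfolding v_def by (rule add_scalar_prod_distrib[OF sv1 Rcc])
      also have "\<dots> = a * (P \<bullet> (R *\<^sub>v c)) + (1 - a) * (x \<bullet> (R *\<^sub>v c))"
        using smult_scalar_prod_distrib[OF Pc Rcc] smult_scalar_prod_distrib[OF xc Rcc] by simp
      finally show ?thesis using PR'[OF c] xR(1)[OF c] by simp
    qed
    have vR: "v \<bullet> (R *\<^sub>v c) = 0" "(R *\<^sub>v c) \<bullet> v = 0" if c: "c \<in> carrier_vec M" for c
    proof -
      have Rcc: "R *\<^sub>v c \<in> carrier_vec n" using R c by simp
      show "v \<bullet> (R *\<^sub>v c) = 0" by (rule vR1[OF c])
      show "(R *\<^sub>v c) \<bullet> v = 0" using vR1[OF c] comm_scalar_prod[OF Rcc vc] by simp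
    qed
    have RR: "(R *\<^sub>v c) \<bullet> (R *\<^sub>v d) = c \<bullet> d" if "c \<in> carrier_vec M" "d \<in> carrier_vec M" for c d
      by (rule on_pres[OF R RR' that])
    have CC: "col C k \<bullet> col C l = (if k = l then s else 0) + s * (1 - a)" if "k < M" "l < M" for k l
    proof -
      have "(transpose_mat C * C) $$ (k, l) = A $$ (k, l)" using CA by simp
      moreover have "(transpose_mat C * C) $$ (k, l) = row (transpose_mat C) k \<bullet> col C l"
        by (rule index_mult_mat(1)) (use that C in auto)
      moreover have "row (transpose_mat C) k = col C k"
        by (rule row_transpose) (use that C in auto)
      ultimately show ?thesis using Aidx[OF that] by simp
    qed
    have Pv: "P \<bullet> v = a * (y \<bullet> y) + (1 - a) * (y \<bullet> y)"
    proof -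
      have "P \<bullet> v = P \<bullet> (a \<cdot>\<^sub>v P) + P \<bullet> ((1 - a) \<cdot>\<^sub>v x)"
        unfolding v_def by (rule scalar_prod_add_distrib[OF Pc sv1])
      also have "\<dots> = a * (P \<bullet> P) + (1 - a) * (P \<bullet> x)"
        using scalar_prod_smult_distrib[OF Pc Pc] scalar_prod_smult_distrib[OF Pc xc] by simp
      finally show ?thesis using PP Px by simp
    qed
    have xv: "x \<bullet> v = a * (y \<bullet> y) + (1 - a)"
    proof -
      have "x \<bullet> v = x \<bullet> (a \<cdot>\<^sub>v P) + x \<bullet> ((1 - a) \<cdot>\<^sub>v x)"
        unfolding v_def by (rule scalar_prod_add_distrib[OF xc sv1])
      also have "\<dots> = a * (x \<bullet> P) + (1 - a) * (x \<bullet> x)"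
        using scalar_prod_smult_distrib[OF xc Pc] scalar_prod_smult_distrib[OF xc xc] by simp
      finally show ?thesis using xP xx by simp
    qed
    have vv0: "v \<bullet> v = a * (P \<bullet> v) + (1 - a) * (x \<bullet> v)"
    proof -
      have "v \<bullet> v = (a \<cdot>\<^sub>v P + (1 - a) \<cdot>\<^sub>v x) \<bullet> v" by (subst (1) v_def) (rule refl)
      also have "\<dots> = (a \<cdot>\<^sub>v P) \<bullet> v + ((1 - a) \<cdot>\<^sub>v x) \<bullet> v"
        by (rule add_scalar_prod_distrib[OF sv1 vc])
      also have "\<dots> = a * (P \<bullet> v) + (1 - a) * (x \<bullet> v)"
        using smult_scalar_prod_distrib[OF Pc vc] smult_scalar_prod_distrib[OF xc vc] by simp
      finally show ?thesis .
    qed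
    define q where "q = y \<bullet> y"
    have vv1: "v \<bullet> v + s * (1 - a) = 1 - s"
    proof -
      have h: "v \<bullet> v = a * (a * q + (1 - a) * q) + (1 - a) * (a * q + (1 - a))"
        using vv0 Pv xv by (simp add: q_def)
      have sq: "s = a * (1 - q)" using s_eq by (simp add: q_def)
      show ?thesis unfolding h sq by (simp add: algebra_simps)
    qed
    have gen: "col (outer v e + R * C) k \<bullet> col (outer v e + R * C) l = v \<bullet> v + col C k \<bullet> col C l"
      if k: "k < M" and l: "l < M" for k l
    proof -
      have vRl: "v + R *\<^sub>v col C l \<in> carrier_vec n" using vc Rc by simp
      have "col (outer v e + R * C) k \<bullet> col (outer v e + R * C) l
            = (v + R *\<^sub>v col C k) \<bullet> (v + R *\<^sub>v col C l)" using colXt k l by simp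
      also have "\<dots> = v \<bullet> (v + R *\<^sub>v col C l) + (R *\<^sub>v col C k) \<bullet> (v + R *\<^sub>v col C l)"
        by (rule add_scalar_prod_distrib[OF vc Rc vRl])
      also have "v \<bullet> (v + R *\<^sub>v col C l) = v \<bullet> v + v \<bullet> (R *\<^sub>v col C l)"
        by (rule scalar_prod_add_distrib[OF vc vc Rc])
      also have "(R *\<^sub>v col C k) \<bullet> (v + R *\<^sub>v col C l) = (R *\<^sub>v col C k) \<bullet> v + (R *\<^sub>v col C k) \<bullet> (R *\<^sub>v col C l)"
        by (rule scalar_prod_add_distrib[OF Rc vc Rc])
      finally show ?thesis using vR[OF cc] RR[OF cc cc] by simp
    qed
    have i1: "col X i \<bullet> col (outer v e + R * C) m = col X i \<bullet> x" if "i < p" "i \<noteq> j" for i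
    proof -
      have "col X i \<bullet> col (outer v e + R * C) m = col X i \<bullet> (v + R *\<^sub>v col C m)"
        using colXt[OF m] by simp
      also have "\<dots> = col X i \<bullet> v + col X i \<bullet> (R *\<^sub>v col C m)"
        by (rule scalar_prod_add_distrib[OF colXc vc Rc])
      also have "col X i \<bullet> v = col X i \<bullet> (a \<cdot>\<^sub>v P) + col X i \<bullet> ((1 - a) \<cdot>\<^sub>v x)"
        unfolding v_def by (rule scalar_prod_add_distrib[OF colXc sv1])
      also have "\<dots> = a * (col X i \<bullet> P) + (1 - a) * (col X i \<bullet> x)"
        using scalar_prod_smult_distrib[OF colXc Pc] scalar_prod_smult_distrib[OF colXc xc] by simp
      finally show ?thesis using xiP[OF that] XRc[OF that(1) cc] by (simp add: algebra_simps)
    qed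
    have i2: "x \<bullet> col (outer v e + R * C) m = 1 - s"
    proof -
      have "x \<bullet> col (outer v e + R * C) m = x \<bullet> (v + R *\<^sub>v col C m)"
        using colXt[OF m] by simp
      also have "\<dots> = x \<bullet> v + x \<bullet> (R *\<^sub>v col C m)"
        by (rule scalar_prod_add_distrib[OF xc vc Rc])
      finally show ?thesis using xv xR(1)[OF cc] s_eq by (simp add: algebra_simps)
    qed
    have i3: "col (outer v e + R * C) m \<bullet> col (outer v e + R * C) m = 1"
      using gen[OF m m] CC[OF m m] vv1 by simp
    have i4: "col (outer v e + R * C) m \<bullet> col (outer v e + R * C) l = 1 - s" if "l < M" "l \<noteq> m" for l
      using gen[OF m that(1)] CC[OF m that(1)] vv1 that by simp
    show ?thesis unfolding v_def[symmetric]
      apply (intro conjI allI impI)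
         apply (rule i1; assumption)
        apply (rule i2)
       apply (rule i3)
      apply (rule i4; assumption)
      done
  qed
  show ?thesis
    unfolding Let_def x_def[symmetric] Pe[unfolded x_def[symmetric]] \<sigma>2_def[symmetric] a_def[symmetric] e_def[symmetric] A_def[symmetric]
    apply (intro conjI[OF psdA] allI impI)
    apply (elim conjE)
    apply (rule main)
         apply assumption+
    done
qed

end
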